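(* Let $\alpha\in(0,1)$, let $0<\varepsilon\le 1/4$, and let $(\varepsilon_t)_{t\ge 0}$ be a spending sequence as described in the context. Suppose there exist constants $\lambda>0$, $q>1$ and $T\in\mathbb{N}$ such that $\varepsilon_t-\varepsilon_{t-1}\ge \lambda t^{-q}$ for all $t\ge T$. Let $p$ be a random variable with values in $[0,1]$ and cumulative distribution function $F$, and suppose that $F$ is H\"older continuous with exponent $\xi>0$ in a neighborhood of $\alpha$, i.e. there exist an open interval $V\ni\alpha$ and $c>0$ with $|F(x)-F(y)|\le c|x-y|^{\xi}$ for all $x,y\in V$. Let $N\in\mathbb{N}$, let $p_1,\dots,p_N$ be independent copies of $p$, and for each $i$, conditionally on $p_1,\dots,p_N$, let $X^i_1,X^i_2,\dots$ be independent Bernoulli$(p_i)$ variables (independently across $i$). Let $S^i_t=\sum_{j=1}^t X^i_j$ and $\tau_i=\inf\{t\in\mathbb{N}: S^i_t\ge U_t \text{ or } S^i_t\le L_t\}$ (with $\inf\emptyset=\infty$), where $U_t,L_t$ are the stopping boundaries defined in the context, and let $\tau_{(1)}\le\dots\le\tau_{(N)}$ be the order statistics of $\tau_1,\dots,\tau_N$. Then $\mathbb{E}[\tau_{(i)}]<\infty$ for every $i\le N-\lfloor 2/\xi\rfloor$. In particular, if $\xi=1$, then $\mathbb{E}[\tau_{(N-2)}]<\infty$.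
   Context: $\mathbb{N}=\{1,2,\dots\}$. A spending sequence is a sequence $(\varepsilon_t)_{t\ge0}$ of reals with $0\le\varepsilon_0\le\varepsilon_1\le\cdots$ and $\varepsilon_t\to\varepsilon$ as $t\to\infty$. For $r\in[0,1]$, let $\mathbb{P}_r$ denote a probability under which $X_1,X_2,\dots$ are i.i.d. Bernoulli$(r)$, and let $S_t=\sum_{j=1}^t X_j$. The stopping boundaries $(U_t)_{t\in\mathbb{N}}$, $(L_t)_{t\in\mathbb{N}}$ are defined recursively: with $\tau=\inf\{t\in\mathbb{N}: S_t\ge U_t\text{ or } S_t\le L_t\}$ (the events $\{\tau\ge t\}$, $\{\tau<t, S_\tau\ge U_\tau\}$, $\{\tau<t,S_\tau\le L_\tau\}$ depend only on $U_s,L_s$ for $s<t$), $U_t=\min\{j\in\mathbb{N}: \mathbb{P}_\alpha(\tau\ge t, S_t\ge j)+\mathbb{P}_\alpha(\tau<t, S_\tau\ge U_\tau)\le\varepsilon_t\}$, $L_t=\max\{j\in\mathbb{Z}: \mathbb{P}_\alpha(\tau\ge t, S_t\le j)+\mathbb{P}_\alpha(\tau<t, S_\tau\le L_\tau)\le\varepsilon_t\}$. *)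

theory Defs
  imports "HOL-Probability.Probability"
begin

text \<open>Paths are x :: nat => bool with X_j = x j for j >= 1 (x 0 is ignored).\<close>

definition Bern_seq :: "real \<Rightarrow> (nat \<Rightarrow> bool) measure" where
  "Bern_seq r = PiM UNIV (\<lambda>_::nat. measure_pmf (bernoulli_pmf r))"

definition Ssum :: "nat \<Rightarrow> (nat \<Rightarrow> bool) \<Rightarrow> int" where
  "Ssum t x = int (card {j \<in> {1..t}. x j})"

definition crosses :: "(nat \<Rightarrow> int \<times> int) \<Rightarrow> (nat \<Rightarrow> bool) \<Rightarrow> nat \<Rightarrow> bool" where
  "crosses B x s \<longleftrightarrow> Ssum s x \<ge> fst (B s) \<or> Ssum s x \<le> snd (B s)"

definition stop_time :: "(nat \<Rightarrow> int \<times> int) \<Rightarrow> (nat \<Rightarrow> bool) \<Rightarrow> enat" where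
  "stop_time B x = (if \<exists>s\<ge>1. crosses B x s then enat (LEAST s. s \<ge> 1 \<and> crosses B x s) else \<infinity>)"

text \<open>bnd a e n gives correct boundaries (U_s, L_s) at all times 1 <= s <= n.
  The boundary at time t = Suc n only uses boundaries at times s < t.\<close>
fun bnd :: "real \<Rightarrow> (nat \<Rightarrow> real) \<Rightarrow> nat \<Rightarrow> (nat \<Rightarrow> int \<times> int)" where
  "bnd a e 0 = (\<lambda>_. (0, 0))"
| "bnd a e (Suc n) =
     (let B = bnd a e n; t = Suc n; P = (\<lambda>A. measure (Bern_seq a) A);
          Up = P {x \<in> space (Bern_seq a). \<exists>s. stop_time B x = enat s \<and> s < t \<and> Ssum s x \<ge> fst (B s)};
          Lo = P {x \<in> space (Bern_seq a). \<exists>s. stop_time B x = enat s \<and> s < t \<and> Ssum s x \<le> snd (B s)};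
          u = (LEAST j::int. j \<ge> 1 \<and>
                 P {x \<in> space (Bern_seq a). enat t \<le> stop_time B x \<and> Ssum t x \<ge> j} + Up \<le> e t);
          l = (GREATEST j::int.
                 P {x \<in> space (Bern_seq a). enat t \<le> stop_time B x \<and> Ssum t x \<le> j} + Lo \<le> e t)
      in B(t := (u, l)))"

definition boundaries :: "real \<Rightarrow> (nat \<Rightarrow> real) \<Rightarrow> nat \<Rightarrow> int \<times> int" where
  "boundaries a e t = bnd a e t t"

definition arm_law :: "real measure \<Rightarrow> (real \<times> (nat \<Rightarrow> bool)) measure" where
  "arm_law mu = bind mu (\<lambda>r. return borel r \<Otimes>\<^sub>M Bern_seq r)"

definition order_stat :: "enat list \<Rightarrow> nat \<Rightarrow> enat" where
  "order_stat vs k = sort vs ! (k - 1)"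

end

theory Submission
  imports Defs
begin


lemma space_Bern[simp]: "space (Bern_seq r) = UNIV"
  by (simp add: Bern_seq_def space_PiM)

lemma sets_Bern[measurable_cong]: "sets (Bern_seq r) = sets (PiM UNIV (\<lambda>_::nat. count_space (UNIV::bool set)))"
  unfolding Bern_seq_def by (intro sets_PiM_cong) auto

lemma Ssum_eq: "Ssum t x = (\<Sum>j\<in>{1..t}. if x j then 1 else 0)"
  unfolding Ssum_def by (simp add: sum.If_cases Int_def conj_commute)

lemma Ssum_real: "real_of_int (Ssum t x) = (\<Sum>j\<in>{1..t}. if x j then 1 else 0)"
  unfolding Ssum_eq by (simp add: of_int_sum if_distrib cong: if_cong)

lemma Ssum_real_meas[measurable]: "(\<lambda>x. real_of_int (Ssum t x)) \<in> borel_measurable (Bern_seq r)"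
  unfolding Ssum_real by measurable

lemma Ssum_meas[measurable]: "Ssum t \<in> measurable (Bern_seq r) (count_space UNIV)"
proof (subst measurable_count_space_eq2_countable, safe)
  fix a :: int
  have "Ssum t -` {a} \<inter> space (Bern_seq r) = {x \<in> space (Bern_seq r). real_of_int (Ssum t x) = real_of_int a}"
    by auto
  also have "\<dots> \<in> sets (Bern_seq r)" by measurable
  finally show "Ssum t -` {a} \<inter> space (Bern_seq r) \<in> sets (Bern_seq r)" .
qed auto



lemma prob_Bern: "prob_space (Bern_seq r)"
  unfolding Bern_seq_def by (intro prob_space_PiM) (simp add: measure_pmf.prob_space_axioms)

lemma pmf_bern_gen: "pmf (bernoulli_pmf r) b = (if b then min 1 (max 0 r) else 1 - min 1 (max 0 r))"
  by (simp add: bernoulli_pmf.rep_eq)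

lemma emeasure_bern_meas:
  "(\<lambda>r. emeasure (measure_pmf (bernoulli_pmf r)) X) \<in> borel_measurable borel"
proof -
  have "emeasure (measure_pmf (bernoulli_pmf r)) X =
     ennreal (\<Sum>b\<in>X. (if b then min 1 (max 0 r) else 1 - min 1 (max 0 r)))" for r
    by (simp add: measure_pmf.emeasure_eq_measure measure_measure_pmf_finite pmf_bern_gen)
  moreover have "(\<lambda>r. ennreal (\<Sum>b\<in>X. (if b then min 1 (max 0 r) else 1 - min 1 (max 0 (r::real))))) \<in> borel_measurable borel"
  proof -
    have "continuous_on UNIV (\<lambda>r. (\<Sum>b\<in>X. (if b then min 1 (max 0 r) else 1 - min 1 (max 0 (r::real)))))"
      apply (rule continuous_on_sum)
      subgoal for b by (cases b) (auto intro!: continuous_on_min continuous_on_max continuous_on_const continuous_on_id continuous_on_diff)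
      done
    then have "(\<lambda>r. (\<Sum>b\<in>X. (if b then min 1 (max 0 r) else 1 - min 1 (max 0 (r::real))))) \<in> borel_measurable borel"
      by (rule borel_measurable_continuous_onI)
    then show ?thesis by (rule measurable_compose[OF _ measurable_ennreal])
  qed
  ultimately show ?thesis by simp
qed

lemma Bern_kernel:
  "(\<lambda>r. Bern_seq r) \<in> measurable borel (subprob_algebra (PiM UNIV (\<lambda>_::nat. count_space (UNIV::bool set))))"
proof (rule measurable_subprob_algebra_generated[where \<Omega>=UNIV and G="prod_algebra UNIV (\<lambda>_::nat. count_space (UNIV::bool set))"])
  show "sets (PiM UNIV (\<lambda>_::nat. count_space (UNIV::bool set))) = sigma_sets UNIV (prod_algebra UNIV (\<lambda>_::nat. count_space (UNIV::bool set)))"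
    by (simp add: sets_PiM)
  show "Int_stable (prod_algebra UNIV (\<lambda>_::nat. count_space (UNIV::bool set)))"
    by (rule Int_stable_prod_algebra)
  show "prod_algebra UNIV (\<lambda>_::nat. count_space (UNIV::bool set)) \<subseteq> Pow UNIV" by auto
  show "subprob_space (Bern_seq a)" for a
    using prob_Bern by (rule prob_space_imp_subprob_space)
  show "sets (Bern_seq a) = sets (PiM UNIV (\<lambda>_::nat. count_space (UNIV::bool set)))" for a
    by (rule sets_Bern)
  show "(\<lambda>a. emeasure (Bern_seq a) UNIV) \<in> borel_measurable borel"
  proof -
    have "emeasure (Bern_seq a) UNIV = 1" for a
      using prob_space.emeasure_space_1[OF prob_Bern, of a] by simp
    then show ?thesis by simp
  qed
  fix A assume "A \<in> prod_algebra UNIV (\<lambda>_::nat. count_space (UNIV::bool set))"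
  then obtain J E where A: "A = prod_emb UNIV (\<lambda>_::nat. count_space (UNIV::bool set)) J (PiE J E)" "finite J"
    by (auto elim!: prod_algebraE)
  have eq: "emeasure (Bern_seq a) A = (\<Prod>j\<in>J. emeasure (measure_pmf (bernoulli_pmf a)) (E j))" for a
  proof -
    interpret product_prob_space "\<lambda>_::nat. measure_pmf (bernoulli_pmf a)" UNIV
      by (intro product_prob_spaceI) (simp add: measure_pmf.prob_space_axioms)
    have "A = prod_emb UNIV (\<lambda>_::nat. measure_pmf (bernoulli_pmf a)) J (PiE J E)"
      unfolding A by (simp add: prod_emb_def)
    then show ?thesis unfolding Bern_seq_def
      using emeasure_PiM_emb[of J E] A(2) by simp
  qed
  show "(\<lambda>a. emeasure (Bern_seq a) A) \<in> borel_measurable borel"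
    unfolding eq by (intro borel_measurable_prod_ennreal emeasure_bern_meas)
qed

lemma arm_kernel:
  assumes "sets \<mu> = sets borel"
  shows "(\<lambda>r. return borel r \<Otimes>\<^sub>M Bern_seq r) \<in> measurable \<mu> (subprob_algebra (borel \<Otimes>\<^sub>M PiM UNIV (\<lambda>_::nat. count_space (UNIV::bool set))))"
proof -
  have "(\<lambda>r. return borel r \<Otimes>\<^sub>M Bern_seq r) \<in> measurable borel (subprob_algebra (borel \<Otimes>\<^sub>M PiM UNIV (\<lambda>_::nat. count_space (UNIV::bool set))))"
    by (intro measurable_pair_measure return_measurable Bern_kernel)
  then show ?thesis by (subst measurable_cong_sets[OF assms refl])
qed

lemma arm_law_emeasure:
  assumes "prob_space \<mu>" "sets \<mu> = sets borel" and A: "A \<in> sets (Bern_seq 0)"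
  shows "emeasure (arm_law \<mu>) (UNIV \<times> A) = (\<integral>\<^sup>+ r. emeasure (Bern_seq r) A \<partial>\<mu>)"
proof -
  have ne: "space \<mu> \<noteq> {}" using prob_space.not_empty[OF assms(1)] .
  have A': "A \<in> sets (PiM UNIV (\<lambda>_::nat. count_space (UNIV::bool set)))" using A sets_Bern by metis
  have "emeasure (arm_law \<mu>) (UNIV \<times> A) = (\<integral>\<^sup>+ r. emeasure (return borel r \<Otimes>\<^sub>M Bern_seq r) (UNIV \<times> A) \<partial>\<mu>)"
    unfolding arm_law_def
    by (rule emeasure_bind[OF ne arm_kernel[OF assms(2)]]) (use A' in simp)
  also have "\<dots> = (\<integral>\<^sup>+ r. emeasure (Bern_seq r) A \<partial>\<mu>)"
  proof (intro nn_integral_cong)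
    fix r
    interpret prob_space "Bern_seq r" by (rule prob_Bern)
    have "emeasure (return borel r \<Otimes>\<^sub>M Bern_seq r) (UNIV \<times> A) = emeasure (return borel r) UNIV * emeasure (Bern_seq r) A"
      by (rule emeasure_pair_measure_Times) (use A sets_Bern in auto)
    then show "emeasure (return borel r \<Otimes>\<^sub>M Bern_seq r) (UNIV \<times> A) = emeasure (Bern_seq r) A"
      by simp
  qed
  finally show ?thesis .
qed

lemma arm_law_prob: assumes "prob_space \<mu>" "sets \<mu> = sets borel"
  shows "prob_space (arm_law \<mu>)"
  unfolding arm_law_def
proof (rule prob_space.prob_space_bind[OF assms(1) _ arm_kernel[OF assms(2)]])
  show "AE x in \<mu>. prob_space (return borel x \<Otimes>\<^sub>M Bern_seq x)"
    by (rule AE_I2, rule prob_space_pair, rule prob_space_return, simp, rule prob_Bern)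
qed

lemma arm_law_sets: assumes "prob_space \<mu>" "sets \<mu> = sets borel"
  shows "sets (arm_law \<mu>) = sets (borel \<Otimes>\<^sub>M PiM UNIV (\<lambda>_::nat. count_space (UNIV::bool set)))"
  unfolding arm_law_def
  by (rule sets_bind[OF _ prob_space.not_empty[OF assms(1)]], rule sets_pair_measure_cong, simp, rule sets_Bern)


lemma Bern_distr_component:
  "distr (Bern_seq r) (count_space UNIV) (\<lambda>x. x i) = measure_pmf (bernoulli_pmf r)"
proof -
  interpret product_prob_space "\<lambda>_::nat. measure_pmf (bernoulli_pmf r)" UNIV
    by (intro product_prob_spaceI) (simp add: measure_pmf.prob_space_axioms)
  have "distr (Bern_seq r) (count_space UNIV) (\<lambda>x. x i) = distr (Bern_seq r) (measure_pmf (bernoulli_pmf r)) (\<lambda>x. x i)"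
    by (rule distr_cong) auto
  also have "\<dots> = measure_pmf (bernoulli_pmf r)"
    unfolding Bern_seq_def by (rule PiM_component) simp
  finally show ?thesis .
qed

lemma Bern_indep:
  assumes "I \<noteq> {}" "finite I"
  shows "prob_space.indep_vars (Bern_seq r) (\<lambda>_. borel) (\<lambda>i x. if x i then 1 else (0::real)) I"
proof -
  interpret BP: prob_space "Bern_seq r" by (rule prob_Bern)
  interpret product_prob_space "\<lambda>_::nat. measure_pmf (bernoulli_pmf r)" UNIV
    by (intro product_prob_spaceI) (simp add: measure_pmf.prob_space_axioms)
  have rv: "(\<lambda>x. x i) \<in> measurable (Bern_seq r) (count_space UNIV)" if "i \<in> I" for i
      by measurable
  have "BP.indep_vars (\<lambda>_. count_space UNIV) (\<lambda>i x. x i) I"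
  proof (subst BP.indep_vars_iff_distr_eq_PiM'[where M'="\<lambda>_. count_space UNIV" and X="\<lambda>i x. x i", OF assms(1) rv], assumption)
    have "distr (Bern_seq r) (Pi\<^sub>M I (\<lambda>i. count_space UNIV)) (\<lambda>x. restrict x I)
        = distr (PiM UNIV (\<lambda>_. measure_pmf (bernoulli_pmf r))) (Pi\<^sub>M I (\<lambda>i. measure_pmf (bernoulli_pmf r))) (\<lambda>x. restrict x I)"
      unfolding Bern_seq_def by (rule distr_cong) (auto intro!: sets_PiM_cong)
    also have "\<dots> = Pi\<^sub>M I (\<lambda>i. measure_pmf (bernoulli_pmf r))"
      by (rule distr_PiM_restrict_finite) (use assms in auto)
    also have "\<dots> = Pi\<^sub>M I (\<lambda>i. distr (Bern_seq r) (count_space UNIV) (\<lambda>x. x i))"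
      by (simp add: Bern_distr_component)
    finally show "distr (Bern_seq r) (Pi\<^sub>M I (\<lambda>i. count_space UNIV)) (\<lambda>x. \<lambda>i\<in>I. x i) =
      Pi\<^sub>M I (\<lambda>i. distr (Bern_seq r) (count_space UNIV) (\<lambda>x. x i))" by simp
  qed
  then show ?thesis
    by (rule BP.indep_vars_compose2) auto
qed

lemma Bern_hoeffding:
  assumes r: "0 \<le> r" "r \<le> 1" and t: "t \<ge> 1" and w: "w \<ge> 0"
  shows "measure (Bern_seq r) {x. real_of_int (Ssum t x) \<ge> r * t + w} \<le> exp (-2 * w\<^sup>2 / t)"
    and "measure (Bern_seq r) {x. real_of_int (Ssum t x) \<le> r * t - w} \<le> exp (-2 * w\<^sup>2 / t)"
proof -
  interpret BP: prob_space "Bern_seq r" by (rule prob_Bern)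
  define X :: "nat \<Rightarrow> (nat \<Rightarrow> bool) \<Rightarrow> real" where "X = (\<lambda>i x. if x i then 1 else (0::real))"
  define Y where "Y = (\<lambda>x. if x (1::nat) then 1 else (0::real))"
  have XY: "distr (Bern_seq r) borel (X i) = distr (measure_pmf (bernoulli_pmf r)) borel (\<lambda>b. if b then 1 else 0)" for i
  proof -
    have "distr (Bern_seq r) borel (X i) = distr (distr (Bern_seq r) (count_space UNIV) (\<lambda>x. x i)) borel (\<lambda>b. if b then 1 else 0)"
      unfolding X_def by (subst distr_distr) (auto simp: o_def)
    then show ?thesis by (simp add: Bern_distr_component)
  qed
  have EY: "BP.expectation Y = r"
  proof -
    have "BP.expectation Y = integral\<^sup>L (distr (Bern_seq r) borel Y) (\<lambda>x. x)"
      unfolding Y_def by (subst integral_distr) auto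
    also have "\<dots> = integral\<^sup>L (distr (measure_pmf (bernoulli_pmf r)) borel (\<lambda>b. if b then 1 else 0)) (\<lambda>x. x)"
      using XY[of 1] by (simp add: X_def Y_def)
    also have "\<dots> = r" by (subst integral_distr) (use r in auto)
    finally show ?thesis .
  qed
  interpret H: Hoeffding_ineq_iid "Bern_seq r" "{1..t}" X Y 0 1 r
  proof unfold_locales
    show "finite {1..t}" by simp
    show "BP.indep_vars (\<lambda>_. borel) X {1..t}" unfolding X_def
      by (rule Bern_indep) (use t in auto)
    show "distr (Bern_seq r) borel (X i) = distr (Bern_seq r) borel Y" if "i \<in> {1..t}" for i
      using XY[of i] XY[of 1] by (simp add: X_def Y_def)
    have "(\<lambda>x. x (1::nat)) \<in> measurable (Bern_seq r) (count_space UNIV)" by measurable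
    then show "Y \<in> borel_measurable (Bern_seq r)" unfolding Y_def
      using measurable_compose[OF _ , of "\<lambda>x. x (1::nat)" "Bern_seq r" "count_space UNIV" "\<lambda>b. if b then 1 else (0::real)" borel] by simp
    show "AE x in Bern_seq r. Y x \<in> {0..1}" unfolding Y_def by auto
    show "r \<equiv> BP.expectation Y" using EY by simp
  qed
  have sumeq: "(\<Sum>i\<in>{1..t}. X i x) = real_of_int (Ssum t x)" for x
    by (simp add: Ssum_real X_def)
  have ne: "{1..t} \<noteq> {}" using t by auto
  show "measure (Bern_seq r) {x. real_of_int (Ssum t x) \<ge> r * t + w} \<le> exp (-2 * w\<^sup>2 / t)"
    using H.Hoeffding_ineq_ge[OF w _ ne] unfolding sumeq by (simp add: mult.commute)
  show "measure (Bern_seq r) {x. real_of_int (Ssum t x) \<le> r * t - w} \<le> exp (-2 * w\<^sup>2 / t)"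
    using H.Hoeffding_ineq_le[OF w _ ne] unfolding sumeq by (simp add: mult.commute)
qed


lemma bnd_beyond: "n < s \<Longrightarrow> bnd a e n s = (0,0)"
  by (induction n) (auto simp: Let_def)

lemma bnd_stable: "s \<le> n \<Longrightarrow> bnd a e n s = boundaries a e s"
proof (induction n)
  case 0 then show ?case by (simp add: boundaries_def)
next
  case (Suc n)
  show ?case
  proof (cases "s = Suc n")
    case True then show ?thesis by (simp add: boundaries_def)
  next
    case False
    then have "s \<le> n" using Suc.prems by simp
    then show ?thesis using Suc.IH False by (simp add: Let_def)
  qed
qed

lemma st_cases:
  "stop_time B x = (if \<exists>s\<ge>1. crosses B x s then enat (LEAST s. s \<ge> 1 \<and> crosses B x s) else \<infinity>)"
  by (simp add: stop_time_def)

lemma st_ge: "enat t \<le> stop_time B x \<longleftrightarrow> (\<forall>s. 1 \<le> s \<and> s < t \<longrightarrow> \<not> crosses B x s)"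
proof (cases "\<exists>s\<ge>1. crosses B x s")
  case True
  define m where "m = (LEAST s. s \<ge> 1 \<and> crosses B x s)"
  have m: "m \<ge> 1 \<and> crosses B x m" unfolding m_def using True by (metis (mono_tags, lifting) LeastI)
  have mle: "\<And>s. s \<ge> 1 \<and> crosses B x s \<Longrightarrow> m \<le> s" unfolding m_def by (rule Least_le)
  have "stop_time B x = enat m" using True by (simp add: stop_time_def m_def)
  moreover have "t \<le> m \<longleftrightarrow> (\<forall>s. 1 \<le> s \<and> s < t \<longrightarrow> \<not> crosses B x s)"
  proof
    assume "t \<le> m" then show "\<forall>s. 1 \<le> s \<and> s < t \<longrightarrow> \<not> crosses B x s"
      using mle by (meson leD le_less_trans)
  next
    assume "\<forall>s. 1 \<le> s \<and> s < t \<longrightarrow> \<not> crosses B x s" then show "t \<le> m"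
      using m by (meson not_le)
  qed
  ultimately show ?thesis by simp
next
  case False
  then show ?thesis by (auto simp: stop_time_def)
qed

lemma st_eq: "stop_time B x = enat s \<longleftrightarrow> 1 \<le> s \<and> crosses B x s \<and> (\<forall>s'. 1 \<le> s' \<and> s' < s \<longrightarrow> \<not> crosses B x s')"
proof (cases "\<exists>s\<ge>1. crosses B x s")
  case True
  define m where "m = (LEAST s. s \<ge> 1 \<and> crosses B x s)"
  have m: "m \<ge> 1 \<and> crosses B x m" unfolding m_def using True by (metis (mono_tags, lifting) LeastI)
  have mle: "\<And>s. s \<ge> 1 \<and> crosses B x s \<Longrightarrow> m \<le> s" unfolding m_def by (rule Least_le)
  have "stop_time B x = enat m" using True by (simp add: stop_time_def m_def)
  then show ?thesis using m mle by (auto simp: not_le) (meson le_less_trans less_le_not_le nat_less_le)+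
next
  case False
  then show ?thesis by (auto simp: stop_time_def)
qed

lemma st_gt: "enat t < stop_time B x \<longleftrightarrow> (\<forall>s. 1 \<le> s \<and> s \<le> t \<longrightarrow> \<not> crosses B x s)"
proof -
  have "enat t < stop_time B x \<longleftrightarrow> enat (Suc t) \<le> stop_time B x"
    by (simp add: Suc_ile_eq)
  then show ?thesis unfolding st_ge by (simp add: less_Suc_eq_le)
qed

lemma crosses_cong: "B s = B' s \<Longrightarrow> crosses B x s = crosses B' x s"
  by (simp add: crosses_def)

lemma st_ge_cong: "(\<And>s. 1 \<le> s \<Longrightarrow> s < t \<Longrightarrow> B s = B' s) \<Longrightarrow> enat t \<le> stop_time B x \<longleftrightarrow> enat t \<le> stop_time B' x"
  unfolding st_ge by (metis crosses_cong)

lemma st_eq_cong: "(\<And>s'. 1 \<le> s' \<Longrightarrow> s' \<le> s \<Longrightarrow> B s' = B' s') \<Longrightarrow> stop_time B x = enat s \<longleftrightarrow> stop_time B' x = enat s"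
  unfolding st_eq by (metis crosses_cong less_imp_le order_refl)

lemma meas_crosses[measurable]: "Measurable.pred (Bern_seq r) (\<lambda>x. crosses B x s)"
  unfolding crosses_def by measurable

lemma meas_st_ge[measurable]: "Measurable.pred (Bern_seq r) (\<lambda>x. enat t \<le> stop_time B x)"
proof -
  have "(\<lambda>x. enat t \<le> stop_time B x) = (\<lambda>x. \<forall>s\<in>{1..<t}. \<not> crosses B x s)"
    by (auto simp: st_ge)
  also have "Measurable.pred (Bern_seq r) \<dots>" by measurable
  finally show ?thesis .
qed

lemma meas_st_gt[measurable]: "Measurable.pred (Bern_seq r) (\<lambda>x. enat t < stop_time B x)"
proof -
  have "(\<lambda>x. enat t < stop_time B x) = (\<lambda>x. \<forall>s\<in>{1..t}. \<not> crosses B x s)"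
    by (auto simp: st_gt)
  also have "Measurable.pred (Bern_seq r) \<dots>" by measurable
  finally show ?thesis .
qed

lemma meas_st_eq[measurable]: "Measurable.pred (Bern_seq r) (\<lambda>x. stop_time B x = enat s)"
proof -
  have "(\<lambda>x. stop_time B x = enat s) = (\<lambda>x. 1 \<le> s \<and> crosses B x s \<and> (\<forall>s'\<in>{1..<s}. \<not> crosses B x s'))"
    by (auto simp: st_eq)
  also have "Measurable.pred (Bern_seq r) \<dots>" by measurable
  finally show ?thesis .
qed


definition "UpS a e t = {x. \<exists>s. stop_time (boundaries a e) x = enat s \<and> s < t \<and> Ssum s x \<ge> fst (boundaries a e s)}"
definition "LoS a e t = {x. \<exists>s. stop_time (boundaries a e) x = enat s \<and> s < t \<and> Ssum s x \<le> snd (boundaries a e s)}"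
definition "GeS a e t j = {x. enat t \<le> stop_time (boundaries a e) x \<and> Ssum t x \<ge> j}"
definition "LeS a e t j = {x. enat t \<le> stop_time (boundaries a e) x \<and> Ssum t x \<le> j}"

lemma UpS_meas[measurable]: "UpS a e t \<in> sets (Bern_seq r)"
proof -
  have "UpS a e t = {x \<in> space (Bern_seq r). \<exists>s. stop_time (boundaries a e) x = enat s \<and> s < t \<and> Ssum s x \<ge> fst (boundaries a e s)}" by (simp add: UpS_def)
  also have "\<dots> \<in> sets (Bern_seq r)" by measurable
  finally show ?thesis .
qed
lemma LoS_meas[measurable]: "LoS a e t \<in> sets (Bern_seq r)"
proof -
  have "LoS a e t = {x \<in> space (Bern_seq r). \<exists>s. stop_time (boundaries a e) x = enat s \<and> s < t \<and> Ssum s x \<le> snd (boundaries a e s)}" by (simp add: LoS_def)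
  also have "\<dots> \<in> sets (Bern_seq r)" by measurable
  finally show ?thesis .
qed
lemma GeS_meas[measurable]: "GeS a e t j \<in> sets (Bern_seq r)"
proof -
  have "GeS a e t j = {x \<in> space (Bern_seq r). enat t \<le> stop_time (boundaries a e) x \<and> Ssum t x \<ge> j}" by (simp add: GeS_def)
  also have "\<dots> \<in> sets (Bern_seq r)" by measurable
  finally show ?thesis .
qed
lemma LeS_meas[measurable]: "LeS a e t j \<in> sets (Bern_seq r)"
proof -
  have "LeS a e t j = {x \<in> space (Bern_seq r). enat t \<le> stop_time (boundaries a e) x \<and> Ssum t x \<le> j}" by (simp add: LeS_def)
  also have "\<dots> \<in> sets (Bern_seq r)" by measurable
  finally show ?thesis .
qed

lemma bnd_char:
  "boundaries a e (Suc n) =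
    ((LEAST j::int. j \<ge> 1 \<and> measure (Bern_seq a) (GeS a e (Suc n) j) + measure (Bern_seq a) (UpS a e (Suc n)) \<le> e (Suc n)),
     (GREATEST j::int. measure (Bern_seq a) (LeS a e (Suc n) j) + measure (Bern_seq a) (LoS a e (Suc n)) \<le> e (Suc n)))"
proof -
  let ?B = "bnd a e n"
  have agree: "\<And>s. s \<le> n \<Longrightarrow> ?B s = boundaries a e s" by (rule bnd_stable)
  have e1: "{x \<in> space (Bern_seq a). \<exists>s. stop_time ?B x = enat s \<and> s < Suc n \<and> Ssum s x \<ge> fst (?B s)} = UpS a e (Suc n)"
    unfolding UpS_def
  proof (intro set_eqI iffI; clarsimp)
    fix x s assume "stop_time ?B x = enat s" "s < Suc n" "fst (?B s) \<le> Ssum s x"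
    then show "\<exists>s. stop_time (boundaries a e) x = enat s \<and> s < Suc n \<and> fst (boundaries a e s) \<le> Ssum s x"
      using st_eq_cong[of s ?B "boundaries a e" x] agree by (intro exI[of _ s]) auto
  next
    fix x s assume "stop_time (boundaries a e) x = enat s" "s < Suc n" "fst (boundaries a e s) \<le> Ssum s x"
    then show "\<exists>s. stop_time ?B x = enat s \<and> s < Suc n \<and> fst (?B s) \<le> Ssum s x"
      using st_eq_cong[of s ?B "boundaries a e" x] agree by (intro exI[of _ s]) auto
  qed
  have e2: "{x \<in> space (Bern_seq a). \<exists>s. stop_time ?B x = enat s \<and> s < Suc n \<and> Ssum s x \<le> snd (?B s)} = LoS a e (Suc n)"
    unfolding LoS_def
  proof (intro set_eqI iffI; clarsimp)
    fix x s assume "stop_time ?B x = enat s" "s < Suc n" "Ssum s x \<le> snd (?B s)"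
    then show "\<exists>s. stop_time (boundaries a e) x = enat s \<and> s < Suc n \<and> Ssum s x \<le> snd (boundaries a e s)"
      using st_eq_cong[of s ?B "boundaries a e" x] agree by (intro exI[of _ s]) auto
  next
    fix x s assume "stop_time (boundaries a e) x = enat s" "s < Suc n" "Ssum s x \<le> snd (boundaries a e s)"
    then show "\<exists>s. stop_time ?B x = enat s \<and> s < Suc n \<and> Ssum s x \<le> snd (?B s)"
      using st_eq_cong[of s ?B "boundaries a e" x] agree by (intro exI[of _ s]) auto
  qed
  have ge: "enat (Suc n) \<le> stop_time ?B x \<longleftrightarrow> enat (Suc n) \<le> stop_time (boundaries a e) x" for x
    by (rule st_ge_cong) (simp add: agree)
  have e3: "{x \<in> space (Bern_seq a). enat (Suc n) \<le> stop_time ?B x \<and> Ssum (Suc n) x \<ge> j} = GeS a e (Suc n) j" for j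
    unfolding GeS_def using ge by auto
  have e4: "{x \<in> space (Bern_seq a). enat (Suc n) \<le> stop_time ?B x \<and> Ssum (Suc n) x \<le> j} = LeS a e (Suc n) j" for j
    unfolding LeS_def using ge by auto
  show ?thesis
    unfolding boundaries_def[of a e "Suc n"] bnd.simps(2) Let_def e1 e2 e3 e4 by simp
qed

lemma int_Least:
  fixes P :: "int \<Rightarrow> bool"
  assumes "P j0" "\<And>j. P j \<Longrightarrow> j \<ge> lb"
  shows "P (LEAST j. P j) \<and> (LEAST j. P j) \<le> j0"
proof -
  define S where "S = {j. lb \<le> j \<and> j \<le> j0 \<and> P j}"
  have fin: "finite S" unfolding S_def by (rule finite_subset[of _ "{lb..j0}"]) auto
  have ne: "j0 \<in> S" unfolding S_def using assms by auto
  define m where "m = Min S"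
  have mS: "m \<in> S" unfolding m_def using fin ne by (intro Min_in) auto
  have "(LEAST j. P j) = m"
  proof (rule Least_equality)
    show "P m" using mS by (simp add: S_def)
    fix y assume "P y"
    show "m \<le> y"
    proof (cases "y \<le> j0")
      case True then have "y \<in> S" using \<open>P y\<close> assms(2) by (simp add: S_def)
      then show ?thesis unfolding m_def using fin by simp
    next
      case False then show ?thesis using mS by (simp add: S_def)
    qed
  qed
  then show ?thesis using mS by (simp add: S_def)
qed

lemma int_Greatest:
  fixes P :: "int \<Rightarrow> bool"
  assumes "P j0" "\<And>j. P j \<Longrightarrow> j \<le> ub"
  shows "P (GREATEST j. P j) \<and> j0 \<le> (GREATEST j. P j)"
proof -
  define S where "S = {j. j0 \<le> j \<and> j \<le> ub \<and> P j}"
  have fin: "finite S" unfolding S_def by (rule finite_subset[of _ "{j0..ub}"]) auto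
  have ne: "j0 \<in> S" unfolding S_def using assms by auto
  define m where "m = Max S"
  have mS: "m \<in> S" unfolding m_def using fin ne by (intro Max_in) auto
  have "(GREATEST j. P j) = m"
  proof (rule Greatest_equality)
    show "P m" using mS by (simp add: S_def)
    fix y assume "P y"
    show "y \<le> m"
    proof (cases "j0 \<le> y")
      case True then have "y \<in> S" using \<open>P y\<close> assms(2) by (simp add: S_def)
      then show ?thesis unfolding m_def using fin by simp
    next
      case False then show ?thesis using mS by (simp add: S_def)
    qed
  qed
  then show ?thesis using mS by (simp add: S_def)
qed


lemma Ssum_le: "Ssum t x \<le> int t"
proof -
  have "card {j \<in> {1..t}. x j} \<le> card {1..t}" by (intro card_mono) auto
  then show ?thesis by (simp add: Ssum_def)
qed

lemma Ssum_ge0: "Ssum t x \<ge> 0" by (simp add: Ssum_def)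

lemma UpS_1: "UpS a e (Suc 0) = {}" and LoS_1: "LoS a e (Suc 0) = {}"
  by (auto simp: UpS_def LoS_def st_eq)

lemma UpS_Suc: "UpS a e (Suc t) \<subseteq> UpS a e t \<union> GeS a e t (fst (boundaries a e t))"
  unfolding UpS_def GeS_def by (auto simp: less_Suc_eq)

lemma LoS_Suc: "LoS a e (Suc t) \<subseteq> LoS a e t \<union> LeS a e t (snd (boundaries a e t))"
  unfolding LoS_def LeS_def by (auto simp: less_Suc_eq)

lemma GeS_empty: "j > int t \<Longrightarrow> GeS a e t j = {}"
  unfolding GeS_def using Ssum_le[of t] by (auto simp: not_le) (meson le_less_trans not_less)

lemma LeS_empty: "j < 0 \<Longrightarrow> LeS a e t j = {}"
  unfolding LeS_def using Ssum_ge0[of t] by auto (meson le_less_trans not_less)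

lemma StGe_meas[measurable]: "{x. enat t \<le> stop_time B x} \<in> sets (Bern_seq r)"
proof -
  have "{x. enat t \<le> stop_time B x} = {x \<in> space (Bern_seq r). enat t \<le> stop_time B x}" by simp
  also have "\<dots> \<in> sets (Bern_seq r)" by measurable
  finally show ?thesis .
qed

lemma cover: "UNIV \<subseteq> {x. enat t \<le> stop_time (boundaries a e) x} \<union> UpS a e t \<union> LoS a e t"
proof
  fix x :: "nat \<Rightarrow> bool"
  assume "x \<in> UNIV"
  show "x \<in> {x. enat t \<le> stop_time (boundaries a e) x} \<union> UpS a e t \<union> LoS a e t"
  proof (cases "enat t \<le> stop_time (boundaries a e) x")
    case False
    then obtain s where s: "stop_time (boundaries a e) x = enat s" "s < t"
      by (cases "stop_time (boundaries a e) x") auto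
    then have "crosses (boundaries a e) x s" by (simp add: st_eq)
    then show ?thesis using s unfolding UpS_def LoS_def crosses_def by auto
  qed simp
qed

locale spend_ctx =
  fixes a :: real and e :: "nat \<Rightarrow> real"
  assumes e0: "0 \<le> e 0" and einc: "incseq e" and equarter: "\<And>t. e t \<le> 1/4"
begin

abbreviation "PB \<equiv> measure (Bern_seq a)"
abbreviation "U t \<equiv> fst (boundaries a e t)"
abbreviation "L t \<equiv> snd (boundaries a e t)"

lemma P_prob: "prob_space (Bern_seq a)" by (rule prob_Bern)

lemma main_rec: "PB (UpS a e (Suc t)) \<le> e t \<and> PB (LoS a e (Suc t)) \<le> e t"
proof (induction t)
  case 0
  then show ?case using e0 by (simp add: UpS_1 LoS_1)
next
  case (Suc t)
  interpret BP: prob_space "Bern_seq a" by (rule prob_Bern)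
  define t' where "t' = Suc t"
  have et: "e t \<le> e t'" using einc unfolding t'_def by (simp add: incseq_SucD)
  have IHU: "PB (UpS a e t') \<le> e t'" and IHL: "PB (LoS a e t') \<le> e t'"
    using Suc.IH et unfolding t'_def by auto
  define condU where "condU j = (j \<ge> 1 \<and> PB (GeS a e t' j) + PB (UpS a e t') \<le> e t')" for j
  define condL where "condL j = (PB (LeS a e t' j) + PB (LoS a e t') \<le> e t')" for j
  have bc: "boundaries a e t' = ((LEAST j. condU j), (GREATEST j. condL j))"
    unfolding t'_def condU_def condL_def by (rule bnd_char)
  have cU: "condU (U t')"
  proof -
    have "condU (int t' + 1)" unfolding condU_def using IHU by (simp add: GeS_empty)
    then show ?thesis using int_Least[of condU "int t' + 1" 1] bc by (simp add: condU_def)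
  qed
  have cL: "condL (L t')"
  proof -
    have "condL (-1)" unfolding condL_def using IHL by (simp add: LeS_empty)
    moreover have "j \<le> int t'" if "condL j" for j
    proof (rule ccontr)
      assume "\<not> j \<le> int t'"
      then have "LeS a e t' j = {x. enat t' \<le> stop_time (boundaries a e) x}"
        unfolding LeS_def using Ssum_le[of t'] by (auto simp: not_le) (meson less_trans not_le)
      then have "PB {x. enat t' \<le> stop_time (boundaries a e) x} + PB (LoS a e t') \<le> 1/4"
        using that equarter[of t'] unfolding condL_def by simp
      moreover have "PB (UpS a e t') \<le> 1/4" using Suc.IH equarter[of t] unfolding t'_def by linarith
      moreover have "1 \<le> PB {x. enat t' \<le> stop_time (boundaries a e) x} + PB (UpS a e t') + PB (LoS a e t')"
      proof -
        have "1 = PB UNIV" using BP.prob_space by simp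
        also have "\<dots> \<le> PB ({x. enat t' \<le> stop_time (boundaries a e) x} \<union> UpS a e t' \<union> LoS a e t')"
          using cover[of t' a e] by (simp add: top.extremum_unique)
        also have "\<dots> \<le> PB ({x. enat t' \<le> stop_time (boundaries a e) x} \<union> UpS a e t') + PB (LoS a e t')"
          by (rule measure_Un_le) auto
        also have "PB ({x. enat t' \<le> stop_time (boundaries a e) x} \<union> UpS a e t') \<le> PB {x. enat t' \<le> stop_time (boundaries a e) x} + PB (UpS a e t')"
          by (rule measure_Un_le) auto
        finally show ?thesis by simp
      qed
      ultimately show False by simp
    qed
    ultimately show ?thesis using int_Greatest[of condL "-1" "int t'"] bc by simp
  qed
  have "PB (UpS a e (Suc t')) \<le> PB (UpS a e t' \<union> GeS a e t' (U t'))"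
    by (rule BP.finite_measure_mono[OF UpS_Suc]) simp
  also have "\<dots> \<le> PB (UpS a e t') + PB (GeS a e t' (U t'))"
    by (rule measure_Un_le) auto
  also have "\<dots> \<le> e t'" using cU unfolding condU_def by simp
  finally have 1: "PB (UpS a e (Suc t')) \<le> e t'" .
  have "PB (LoS a e (Suc t')) \<le> PB (LoS a e t' \<union> LeS a e t' (L t'))"
    by (rule BP.finite_measure_mono[OF LoS_Suc]) simp
  also have "\<dots> \<le> PB (LoS a e t') + PB (LeS a e t' (L t'))"
    by (rule measure_Un_le) auto
  also have "\<dots> \<le> e t'" using cL unfolding condL_def by simp
  finally have 2: "PB (LoS a e (Suc t')) \<le> e t'" .
  show ?case using 1 2 unfolding t'_def by simp
qed

lemma U_le:
  assumes "j0 \<ge> 1" "PB (GeS a e (Suc n) j0) + PB (UpS a e (Suc n)) \<le> e (Suc n)"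
  shows "U (Suc n) \<le> j0"
  using int_Least[of "\<lambda>j. j \<ge> 1 \<and> PB (GeS a e (Suc n) j) + PB (UpS a e (Suc n)) \<le> e (Suc n)" j0 1] assms
  by (simp add: bnd_char)

lemma L_ge:
  assumes "PB (LeS a e (Suc n) j0) + PB (LoS a e (Suc n)) \<le> e (Suc n)"
  shows "j0 \<le> L (Suc n)"
proof -
  interpret BP: prob_space "Bern_seq a" by (rule prob_Bern)
  let ?c = "\<lambda>j. PB (LeS a e (Suc n) j) + PB (LoS a e (Suc n)) \<le> e (Suc n)"
  have ub: "j \<le> int (Suc n)" if "?c j" for j
  proof (rule ccontr)
    let ?t = "Suc n"
    assume "\<not> j \<le> int ?t"
    then have "LeS a e ?t j = {x. enat ?t \<le> stop_time (boundaries a e) x}"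
      unfolding LeS_def using Ssum_le[of ?t] by (auto simp: not_le) (meson less_trans not_le)
    then have "PB {x. enat ?t \<le> stop_time (boundaries a e) x} + PB (LoS a e ?t) \<le> 1/4"
      using that equarter[of ?t] by simp
    moreover have "PB (UpS a e ?t) \<le> 1/4" using main_rec[of n] equarter[of n] by linarith
    moreover have "1 \<le> PB {x. enat ?t \<le> stop_time (boundaries a e) x} + PB (UpS a e ?t) + PB (LoS a e ?t)"
    proof -
      have "1 = PB UNIV" using BP.prob_space by simp
      also have "\<dots> \<le> PB ({x. enat ?t \<le> stop_time (boundaries a e) x} \<union> UpS a e ?t \<union> LoS a e ?t)"
        using cover[of ?t a e] by (simp add: top.extremum_unique)
      also have "\<dots> \<le> PB ({x. enat ?t \<le> stop_time (boundaries a e) x} \<union> UpS a e ?t) + PB (LoS a e ?t)"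
        by (rule measure_Un_le) auto
      also have "PB ({x. enat ?t \<le> stop_time (boundaries a e) x} \<union> UpS a e ?t) \<le> PB {x. enat ?t \<le> stop_time (boundaries a e) x} + PB (UpS a e ?t)"
        by (rule measure_Un_le) auto
      finally show ?thesis by simp
    qed
    ultimately show False by simp
  qed
  show ?thesis using int_Greatest[of ?c j0 "int (Suc n)"] assms ub by (simp add: bnd_char)
qed

end


lemma Ssum_set: "{x. P (Ssum t x)} \<in> sets (Bern_seq r)"
proof -
  have "{x. P (Ssum t x)} = Ssum t -` {k. P k} \<inter> space (Bern_seq r)" by auto
  also have "\<dots> \<in> sets (Bern_seq r)" by (rule measurable_sets[OF Ssum_meas]) simp
  finally show ?thesis .
qed

context spend_ctx begin

lemma UL_bounds:
  assumes a: "0 \<le> a" "a \<le> 1" and w: "w \<ge> 0"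
    and d: "exp (-2 * w\<^sup>2 / real (Suc n)) \<le> e (Suc n) - e n"
  shows "real_of_int (U (Suc n)) \<le> a * real (Suc n) + w + 1"
    and "real_of_int (L (Suc n)) \<ge> a * real (Suc n) - w - 1"
proof -
  interpret BP: prob_space "Bern_seq a" by (rule prob_Bern)
  let ?t = "Suc n"
  have rec: "PB (UpS a e ?t) \<le> e n" "PB (LoS a e ?t) \<le> e n" using main_rec[of n] by auto
  define j0 where "j0 = max 1 \<lceil>a * real ?t + w\<rceil>"
  have "GeS a e ?t j0 \<subseteq> {x. a * real ?t + w \<le> real_of_int (Ssum ?t x)}"
    unfolding GeS_def j0_def by auto linarith
  then have "PB (GeS a e ?t j0) \<le> PB {x. a * real ?t + w \<le> real_of_int (Ssum ?t x)}"
    using Ssum_set[where P="\<lambda>k. a * real ?t + w \<le> real_of_int k"] by (intro BP.finite_measure_mono) auto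
  also have "\<dots> \<le> exp (-2 * w\<^sup>2 / real ?t)"
    using Bern_hoeffding(1)[OF a _ w, of ?t] by simp
  finally have "PB (GeS a e ?t j0) + PB (UpS a e ?t) \<le> e ?t" using rec d by linarith
  then have "U ?t \<le> j0" by (intro U_le) (auto simp: j0_def)
  moreover have "real_of_int j0 \<le> a * real ?t + w + 1"
    unfolding j0_def using a w by (auto simp: max_def)
  ultimately show "real_of_int (U ?t) \<le> a * real ?t + w + 1"
    by (meson of_int_le_iff order_trans)
  define j1 where "j1 = \<lfloor>a * real ?t - w\<rfloor>"
  have "LeS a e ?t j1 \<subseteq> {x. real_of_int (Ssum ?t x) \<le> a * real ?t - w}"
    unfolding LeS_def j1_def by auto linarith
  then have "PB (LeS a e ?t j1) \<le> PB {x. real_of_int (Ssum ?t x) \<le> a * real ?t - w}"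
    using Ssum_set[where P="\<lambda>k. real_of_int k \<le> a * real ?t - w"] by (intro BP.finite_measure_mono) auto
  also have "\<dots> \<le> exp (-2 * w\<^sup>2 / real ?t)"
    using Bern_hoeffding(2)[OF a _ w, of ?t] by simp
  finally have "PB (LeS a e ?t j1) + PB (LoS a e ?t) \<le> e ?t" using rec d by linarith
  then have "j1 \<le> L ?t" by (intro L_ge)
  moreover have "a * real ?t - w - 1 \<le> real_of_int j1"
    unfolding j1_def by linarith
  ultimately show "real_of_int (L ?t) \<ge> a * real ?t - w - 1"
    by (meson of_int_le_iff order_trans)
qed

lemma tail_bound:
  assumes a: "0 \<le> a" "a \<le> 1" and w: "w \<ge> 0"
    and d: "exp (-2 * w\<^sup>2 / real (Suc n)) \<le> e (Suc n) - e n"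
    and p: "0 \<le> p" "p \<le> 1" and pd: "\<bar>p - a\<bar> \<ge> \<delta>" and dt: "\<delta> * real (Suc n) \<ge> w + 1"
  shows "measure (Bern_seq p) {x. enat (Suc n) < stop_time (boundaries a e) x}
           \<le> exp (-2 * (\<delta> * real (Suc n) - w - 1)\<^sup>2 / real (Suc n))"
proof -
  interpret BP: prob_space "Bern_seq p" by (rule prob_Bern)
  let ?t = "Suc n"
  let ?v = "\<delta> * real ?t - w - 1"
  have v: "?v \<ge> 0" using dt by simp
  have sub: "{x. enat ?t < stop_time (boundaries a e) x} \<subseteq>
      {x. real_of_int (Ssum ?t x) < a * real ?t + w + 1 \<and> real_of_int (Ssum ?t x) > a * real ?t - w - 1}"
  proof
    fix x assume "x \<in> {x. enat ?t < stop_time (boundaries a e) x}"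
    then have "\<not> crosses (boundaries a e) x ?t" by (simp add: st_gt)
    then have "Ssum ?t x < U ?t" "Ssum ?t x > L ?t" by (auto simp: crosses_def)
    then show "x \<in> {x. real_of_int (Ssum ?t x) < a * real ?t + w + 1 \<and> real_of_int (Ssum ?t x) > a * real ?t - w - 1}"
      using UL_bounds[OF a w d] by (auto dest!: of_int_less_iff[THEN iffD2]) 
  qed
  show ?thesis
  proof (cases "p \<ge> a")
    case True
    then have pge: "p \<ge> a + \<delta>" using pd by linarith
    have "{x. real_of_int (Ssum ?t x) < a * real ?t + w + 1 \<and> real_of_int (Ssum ?t x) > a * real ?t - w - 1}
        \<subseteq> {x. real_of_int (Ssum ?t x) \<le> p * real ?t - ?v}"
    proof -
      have "(a + \<delta>) * real ?t \<le> p * real ?t" by (rule mult_right_mono[OF pge]) simp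
      then have "a * real ?t + w + 1 \<le> p * real ?t - ?v" by (simp add: algebra_simps)
      then show ?thesis by auto
    qed
    with sub have "measure (Bern_seq p) {x. enat ?t < stop_time (boundaries a e) x} \<le> measure (Bern_seq p) {x. real_of_int (Ssum ?t x) \<le> p * real ?t - ?v}"
      using Ssum_set[where P="\<lambda>k. real_of_int k \<le> p * real ?t - ?v"] by (intro BP.finite_measure_mono) auto
    also have "\<dots> \<le> exp (-2 * ?v\<^sup>2 / real ?t)"
      using Bern_hoeffding(2)[OF p _ v, of ?t] by simp
    finally show ?thesis .
  next
    case False
    then have ple: "p \<le> a - \<delta>" using pd by linarith
    have "{x. real_of_int (Ssum ?t x) < a * real ?t + w + 1 \<and> real_of_int (Ssum ?t x) > a * real ?t - w - 1}
        \<subseteq> {x. real_of_int (Ssum ?t x) \<ge> p * real ?t + ?v}"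
    proof -
      have "p * real ?t \<le> (a - \<delta>) * real ?t" by (rule mult_right_mono[OF ple]) simp
      then have "a * real ?t - w - 1 \<ge> p * real ?t + ?v" by (simp add: algebra_simps)
      then show ?thesis by auto
    qed
    with sub have "measure (Bern_seq p) {x. enat ?t < stop_time (boundaries a e) x} \<le> measure (Bern_seq p) {x. real_of_int (Ssum ?t x) \<ge> p * real ?t + ?v}"
      using Ssum_set[where P="\<lambda>k. p * real ?t + ?v \<le> real_of_int k"] by (intro BP.finite_measure_mono) auto
    also have "\<dots> \<le> exp (-2 * ?v\<^sup>2 / real ?t)"
      using Bern_hoeffding(1)[OF p _ v, of ?t] by simp
    finally show ?thesis .
  qed
qed

end


lemma enat_sum: "ennreal_of_enat v = (\<Sum>i. (if enat i < v then 1 else 0 :: ennreal))"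
proof -
  have "(\<lambda>i::nat. if enat i < v then 1 else 0) sums ennreal_of_enat v"
    using sums_If_finite[of "\<lambda>r. enat r < v" "\<lambda>_. 1 :: ennreal"]
    by (cases v) (simp_all add: sums_def of_nat_tendsto_top_ennreal)
  then show ?thesis by (simp add: sums_iff)
qed

lemma order_stat_count:
  assumes len: "length vs = N" and i: "1 \<le> i" "i \<le> N" and gt: "t < order_stat vs i"
  shows "N - i + 1 \<le> card {k. k < N \<and> t < vs ! k}"
proof -
  define ws where "ws = sort vs"
  have lw: "length ws = N" using len by (simp add: ws_def)
  have sw: "sorted ws" by (simp add: ws_def)
  have "\<forall>k. i - 1 \<le> k \<and> k < N \<longrightarrow> t < ws ! k"
  proof safe
    fix k assume "i - 1 \<le> k" "k < N"
    then have "ws ! (i - 1) \<le> ws ! k" using sw lw by (intro sorted_nth_mono) auto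
    moreover have "t < ws ! (i - 1)" using gt by (simp add: order_stat_def ws_def)
    ultimately show "t < ws ! k" by simp
  qed
  then have "{k. i - 1 \<le> k \<and> k < N} \<subseteq> {k. k < N \<and> t < ws ! k}" by auto
  then have "card {k. i - 1 \<le> k \<and> k < N} \<le> card {k. k < N \<and> t < ws ! k}"
    by (intro card_mono) auto
  moreover have "card {k. i - 1 \<le> k \<and> k < N} = N - i + 1"
  proof -
    have "{k. i - 1 \<le> k \<and> k < N} = {i - 1..<N}" by auto
    then show ?thesis using i by simp
  qed
  moreover have "card {k. k < N \<and> t < ws ! k} = card {k. k < N \<and> t < vs ! k}"
  proof -
    have "card {k. k < N \<and> t < ws ! k} = length (filter (\<lambda>v. t < v) ws)"
      using lw by (simp add: length_filter_conv_card)
    also have "\<dots> = length (filter (\<lambda>v. t < v) vs)"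
    proof -
      have "mset (filter (\<lambda>v. t < v) ws) = mset (filter (\<lambda>v. t < v) vs)" by (simp add: ws_def)
      then show ?thesis by (metis size_mset)
    qed
    also have "\<dots> = card {k. k < N \<and> t < vs ! k}"
      using len by (simp add: length_filter_conv_card)
    finally show ?thesis .
  qed
  ultimately show ?thesis by simp
qed

lemma order_stat_integral:
  fixes M :: "'a measure" and f :: "'a \<Rightarrow> enat"
  assumes M: "prob_space M" and meas: "\<And>t. {x \<in> space M. enat t < f x} \<in> sets M"
    and i: "1 \<le> i" "i \<le> N"
  shows "(\<integral>\<^sup>+\<omega>. ennreal_of_enat (order_stat (map (\<lambda>k. f (\<omega> k)) [0..<N]) i) \<partial>PiM {..<N} (\<lambda>_. M))
     \<le> of_nat (N choose (N - i + 1)) * (\<Sum>t. emeasure M {x \<in> space M. enat t < f x} ^ (N - i + 1))"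
proof -
  interpret prob_space M by (rule M)
  interpret PP: product_prob_space "\<lambda>_. M" "{..<N}" by unfold_locales
  define m where "m = N - i + 1"
  define Fam where "Fam = {A. A \<subseteq> {..<N} \<and> card A = m}"
  define E where "E t = {x \<in> space M. enat t < f x}" for t :: nat
  define S where "S A t = {\<omega> \<in> space (PiM {..<N} (\<lambda>_. M)). \<forall>k\<in>A. \<omega> k \<in> E t}" for A t
  have finFam: "finite Fam" unfolding Fam_def by (rule finite_subset[of _ "Pow {..<N}"]) auto
  have Smeas: "S A t \<in> sets (PiM {..<N} (\<lambda>_. M))" if "A \<in> Fam" for A t
  proof -
    have "S A t = {\<omega> \<in> space (PiM {..<N} (\<lambda>_. M)). \<forall>k\<in>A. \<omega> k \<in> E t}" by (simp add: S_def)
    also have "\<dots> \<in> sets (PiM {..<N} (\<lambda>_. M))"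
    proof (rule sets.sets_Collect_finite_All')
      show "finite A" "A \<noteq> {}" using that i unfolding Fam_def m_def by (auto simp: finite_subset)
      fix k assume "k \<in> A"
      then have k: "k \<in> {..<N}" using that unfolding Fam_def by auto
      have "{x \<in> space M. x \<in> E t} \<in> sets M" unfolding E_def using meas[of t] by simp
      then show "{\<omega> \<in> space (PiM {..<N} (\<lambda>_. M)). \<omega> k \<in> E t} \<in> sets (PiM {..<N} (\<lambda>_. M))"
        by (rule sets_Collect_single'[OF k])
    qed
    finally show ?thesis .
  qed
  have pw: "ennreal_of_enat (order_stat (map (\<lambda>k. f (\<omega> k)) [0..<N]) i) \<le> (\<Sum>t. \<Sum>A\<in>Fam. indicator (S A t) \<omega>)"
    if \<omega>: "\<omega> \<in> space (PiM {..<N} (\<lambda>_. M))" for \<omega>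
  proof -
    let ?v = "order_stat (map (\<lambda>k. f (\<omega> k)) [0..<N]) i"
    have "(if enat t < ?v then 1 else 0 :: ennreal) \<le> (\<Sum>A\<in>Fam. indicator (S A t) \<omega>)" for t
    proof (cases "enat t < ?v")
      case True
      have "m \<le> card {k. k < N \<and> enat t < map (\<lambda>k. f (\<omega> k)) [0..<N] ! k}"
        unfolding m_def by (rule order_stat_count[OF _ i True]) simp
      also have "{k. k < N \<and> enat t < map (\<lambda>k. f (\<omega> k)) [0..<N] ! k} = {k. k < N \<and> enat t < f (\<omega> k)}"
        by auto
      finally obtain A where A: "A \<subseteq> {k. k < N \<and> enat t < f (\<omega> k)}" "card A = m"
        by (meson obtain_subset_with_card_n)
      have AF: "A \<in> Fam" using A unfolding Fam_def by auto
      have "\<omega> \<in> S A t" unfolding S_def E_def using \<omega> A by (auto simp: space_PiM PiE_iff)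
      then have "(1::ennreal) \<le> indicator (S A t) \<omega>" by simp
      also have "\<dots> \<le> (\<Sum>A\<in>Fam. indicator (S A t) \<omega>)"
        by (rule member_le_sum[OF AF]) (auto simp: finFam)
      finally show ?thesis using True by simp
    qed simp
    then have "(\<Sum>t. (if enat t < ?v then 1 else 0 :: ennreal)) \<le> (\<Sum>t. \<Sum>A\<in>Fam. indicator (S A t) \<omega>)"
      by (intro suminf_le) auto
    then show ?thesis by (simp add: enat_sum[of ?v])
  qed
  have "(\<integral>\<^sup>+\<omega>. ennreal_of_enat (order_stat (map (\<lambda>k. f (\<omega> k)) [0..<N]) i) \<partial>PiM {..<N} (\<lambda>_. M))
      \<le> (\<integral>\<^sup>+\<omega>. (\<Sum>t. \<Sum>A\<in>Fam. indicator (S A t) \<omega>) \<partial>PiM {..<N} (\<lambda>_. M))"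
    by (intro nn_integral_mono pw)
  also have "\<dots> = (\<Sum>t. \<integral>\<^sup>+\<omega>. (\<Sum>A\<in>Fam. indicator (S A t) \<omega>) \<partial>PiM {..<N} (\<lambda>_. M))"
    by (intro nn_integral_suminf borel_measurable_sum) (auto intro!: borel_measurable_indicator Smeas)
  also have "\<dots> = (\<Sum>t. \<Sum>A\<in>Fam. emeasure (PiM {..<N} (\<lambda>_. M)) (S A t))"
  proof (intro suminf_cong)
    fix t
    have "(\<integral>\<^sup>+\<omega>. (\<Sum>A\<in>Fam. indicator (S A t) \<omega>) \<partial>PiM {..<N} (\<lambda>_. M)) = (\<Sum>A\<in>Fam. \<integral>\<^sup>+\<omega>. indicator (S A t) \<omega> \<partial>PiM {..<N} (\<lambda>_. M))"
      by (rule nn_integral_sum) (auto intro!: borel_measurable_indicator Smeas)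
    also have "\<dots> = (\<Sum>A\<in>Fam. emeasure (PiM {..<N} (\<lambda>_. M)) (S A t))"
      by (intro sum.cong refl nn_integral_indicator Smeas)
    finally show "(\<integral>\<^sup>+\<omega>. (\<Sum>A\<in>Fam. indicator (S A t) \<omega>) \<partial>PiM {..<N} (\<lambda>_. M)) = (\<Sum>A\<in>Fam. emeasure (PiM {..<N} (\<lambda>_. M)) (S A t))" .
  qed
  also have "\<dots> = (\<Sum>t. of_nat (N choose m) * emeasure M (E t) ^ m)"
  proof (intro suminf_cong)
    fix t
    have "emeasure (PiM {..<N} (\<lambda>_. M)) (S A t) = emeasure M (E t) ^ m" if "A \<in> Fam" for A
    proof -
      have "emeasure (PiM {..<N} (\<lambda>_. M)) (S A t) = (\<Prod>k\<in>A. emeasure M (E t))"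
        unfolding S_def using that unfolding Fam_def
        by (intro PP.emeasure_PiM_Collect) (auto simp: E_def meas finite_subset)
      then show ?thesis using that by (simp add: Fam_def)
    qed
    then have "(\<Sum>A\<in>Fam. emeasure (PiM {..<N} (\<lambda>_. M)) (S A t)) = (\<Sum>A\<in>Fam. emeasure M (E t) ^ m)"
      by (intro sum.cong) auto
    also have "\<dots> = of_nat (card Fam) * emeasure M (E t) ^ m" by simp
    also have "card Fam = N choose m"
    proof -
      have "Fam = {A. A \<subseteq> {..<N} \<and> card A = m}" by (simp add: Fam_def)
      then show ?thesis using n_subsets[of "{..<N}" m] by simp
    qed
    finally show "(\<Sum>A\<in>Fam. emeasure (PiM {..<N} (\<lambda>_. M)) (S A t)) = of_nat (N choose m) * emeasure M (E t) ^ m" .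
  qed
  also have "\<dots> = of_nat (N choose m) * (\<Sum>t. emeasure M (E t) ^ m)"
    by (rule ennreal_suminf_cmult)
  finally show ?thesis by (simp add: m_def E_def)
qed


lemma StGt_meas[measurable]: "{x. enat t < stop_time B x} \<in> sets (Bern_seq r)"
proof -
  have "{x. enat t < stop_time B x} = {x \<in> space (Bern_seq r). enat t < stop_time B x}" by simp
  also have "\<dots> \<in> sets (Bern_seq r)" by measurable
  finally show ?thesis .
qed

lemma holder_mass:
  fixes \<mu> :: "real measure"
  assumes mu: "prob_space \<mu>" "sets \<mu> = sets borel"
    and h: "lo < a - \<delta>" "a + \<delta> < hi" "\<delta> > 0"
    and hol: "\<forall>x\<in>{lo<..<hi}. \<forall>y\<in>{lo<..<hi}. \<bar>measure \<mu> {..x} - measure \<mu> {..y}\<bar> \<le> c * \<bar>x - y\<bar> powr \<xi>"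
  shows "measure \<mu> {r. \<bar>r - a\<bar> < \<delta>} \<le> c * (2 * \<delta>) powr \<xi>"
proof -
  interpret prob_space \<mu> by (rule mu(1))
  have sb: "\<And>S. S \<in> sets borel \<Longrightarrow> S \<in> sets \<mu>" using mu(2) by simp
  have "{r. \<bar>r - a\<bar> < \<delta>} \<subseteq> {..a + \<delta>} - {..a - \<delta>}" by auto
  then have "measure \<mu> {r. \<bar>r - a\<bar> < \<delta>} \<le> measure \<mu> ({..a + \<delta>} - {..a - \<delta>})"
    by (intro finite_measure_mono) (auto intro!: sb)
  also have "\<dots> = measure \<mu> {..a + \<delta>} - measure \<mu> {..a - \<delta>}"
    by (rule finite_measure_Diff) (use h in \<open>auto intro!: sb\<close>)
  also have "\<dots> \<le> c * \<bar>(a + \<delta>) - (a - \<delta>)\<bar> powr \<xi>"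
  proof -
    have "a + \<delta> \<in> {lo<..<hi}" "a - \<delta> \<in> {lo<..<hi}" using h by auto
    then have "\<bar>measure \<mu> {..a + \<delta>} - measure \<mu> {..a - \<delta>}\<bar> \<le> c * \<bar>(a + \<delta>) - (a - \<delta>)\<bar> powr \<xi>"
      using hol by blast
    then show ?thesis by (simp add: abs_le_iff)
  qed
  also have "\<bar>(a + \<delta>) - (a - \<delta>)\<bar> = 2 * \<delta>" using h by simp
  finally show ?thesis .
qed

lemma (in spend_ctx) arm_tail:
  fixes \<mu> :: "real measure"
  assumes mu: "prob_space \<mu>" "sets \<mu> = sets borel" "AE r in \<mu>. 0 \<le> r \<and> r \<le> 1"
    and a: "0 \<le> a" "a \<le> 1" and w: "w \<ge> 0"
    and d: "exp (-2 * w\<^sup>2 / real (Suc n)) \<le> e (Suc n) - e n"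
    and dt: "\<delta> * real (Suc n) \<ge> w + 1"
  shows "emeasure (arm_law \<mu>) (UNIV \<times> {x. enat (Suc n) < stop_time (boundaries a e) x})
     \<le> emeasure \<mu> {r. \<bar>r - a\<bar> < \<delta>} + ennreal (exp (-2 * (\<delta> * real (Suc n) - w - 1)\<^sup>2 / real (Suc n)))"
proof -
  interpret MU: prob_space \<mu> by (rule mu(1))
  let ?A = "{x. enat (Suc n) < stop_time (boundaries a e) x}"
  let ?G = "exp (-2 * (\<delta> * real (Suc n) - w - 1)\<^sup>2 / real (Suc n))"
  let ?D = "{r. \<bar>r - a\<bar> < \<delta>}"
  have Dm: "?D \<in> sets \<mu>" using mu(2) by simp
  have "emeasure (arm_law \<mu>) (UNIV \<times> ?A) = (\<integral>\<^sup>+ r. emeasure (Bern_seq r) ?A \<partial>\<mu>)"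
    by (rule arm_law_emeasure[OF mu(1,2)]) simp
  also have "\<dots> \<le> (\<integral>\<^sup>+ r. indicator ?D r + ennreal ?G \<partial>\<mu>)"
  proof (rule nn_integral_mono_AE)
    show "AE r in \<mu>. emeasure (Bern_seq r) ?A \<le> indicator ?D r + ennreal ?G"
      using mu(3)
    proof eventually_elim
      case (elim r)
      interpret BR: prob_space "Bern_seq r" by (rule prob_Bern)
      show ?case
      proof (cases "r \<in> ?D")
        case True
        have "emeasure (Bern_seq r) ?A \<le> 1" by (rule BR.emeasure_le_1)
        then show ?thesis using True by (simp add: add_increasing2)
      next
        case False
        then have "\<bar>r - a\<bar> \<ge> \<delta>" by simp
        from tail_bound[OF a w d _ _ this dt] elim
        have "measure (Bern_seq r) ?A \<le> ?G" by simp
        then have "emeasure (Bern_seq r) ?A \<le> ennreal ?G"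
          by (simp add: BR.emeasure_eq_measure)
        then show ?thesis using False by simp
      qed
    qed
  qed
  also have "\<dots> = (\<integral>\<^sup>+ r. indicator ?D r \<partial>\<mu>) + (\<integral>\<^sup>+ r. ennreal ?G \<partial>\<mu>)"
    by (rule nn_integral_add) (use Dm in auto)
  also have "\<dots> = emeasure \<mu> ?D + ennreal ?G"
    using Dm by (simp add: MU.emeasure_space_1)
  finally show ?thesis .
qed


lemma powr_large:
  fixes t k X :: real
  assumes k: "0 < k" and t: "t \<ge> (max 1 X) powr (1/k)"
  shows "X \<le> t powr k"
proof -
  let ?Y = "max 1 X"
  have Y: "?Y > 0" by simp
  have "?Y = (?Y powr (1/k)) powr k" using k Y by (simp add: powr_powr)
  also have "\<dots> \<le> t powr k" by (rule powr_mono2) (use k t in auto)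
  finally show ?thesis by simp
qed

lemma asym:
  fixes q lam \<gamma> \<beta> \<delta>0 :: real
  assumes q: "q > 0" and lam: "lam > 0" and g: "0 < \<gamma>" "\<gamma> < 1/2" and b: "\<beta> > 0" and d0: "\<delta>0 > 0"
  shows "\<exists>t0. \<forall>t\<ge>t0. t \<ge> 1 \<and> t powr (-\<gamma>) < \<delta>0 \<and>
     t powr (-\<gamma>) * t \<ge> sqrt (t/2 * max 0 (ln (t powr q / lam))) + 1 \<and>
     exp (-2 * (t powr (-\<gamma>) * t - sqrt (t/2 * max 0 (ln (t powr q / lam))) - 1)\<^sup>2 / t) \<le> t powr (-\<beta>)"
proof -
  define \<kappa> where "\<kappa> = 1 - 2 * \<gamma>"
  have k: "\<kappa> > 0" using g by (simp add: \<kappa>_def)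
  define K where "K = (2 * q / \<kappa> + \<bar>ln lam\<bar>) / 2"
  have K: "K \<ge> 0" using q k by (simp add: K_def)
  define X1 where "X1 = (max 1 (4 * sqrt K)) powr (1/(\<kappa>/4))"
  define X2 where "X2 = (max 1 4) powr (1/(1/2 + \<kappa>/2))"
  define X3 where "X3 = (max 1 (4 * \<beta> / \<kappa>)) powr (1/(\<kappa>/2))"
  define X4 where "X4 = (max 1 (2 / \<delta>0)) powr (1/\<gamma>)"
  define t0 where "t0 = max (max 1 X1) (max X2 (max X3 X4))"
  have t0: "1 \<le> t0" "X1 \<le> t0" "X2 \<le> t0" "X3 \<le> t0" "X4 \<le> t0"
    unfolding t0_def by (simp_all add: le_max_iff_disj)
  show ?thesis
  proof (intro exI[of _ t0] allI impI)
    fix t assume tt: "t0 \<le> t"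
    have t1: "t \<ge> 1" using t0 tt by simp
    have tpos: "t > 0" using t1 by simp
    have A1: "4 * sqrt K \<le> t powr (\<kappa>/4)" by (rule powr_large) (use k t0 tt X1_def X2_def X3_def X4_def in auto)
    have A2: "4 \<le> t powr (1/2 + \<kappa>/2)" by (rule powr_large) (use k t0 tt X1_def X2_def X3_def X4_def in auto)
    have A3: "4 * \<beta> / \<kappa> \<le> t powr (\<kappa>/2)" by (rule powr_large) (use k t0 tt X1_def X2_def X3_def X4_def in auto)
    have A4: "2 / \<delta>0 \<le> t powr \<gamma>" by (rule powr_large) (use g t0 tt X4_def in auto)
    define w where "w = sqrt (t/2 * max 0 (ln (t powr q / lam)))"
    define D where "D = t powr (-\<gamma>) * t"
    have D: "D = t powr (1/2 + \<kappa>/2)"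
    proof -
      have e: "1/2 + \<kappa>/2 = -\<gamma> + 1" by (simp add: \<kappa>_def field_simps)
      have "t powr (-\<gamma>) * t = t powr (-\<gamma>) * t powr 1" using tpos by simp
      also have "\<dots> = t powr (-\<gamma> + 1)" by (rule powr_add[symmetric])
      finally show ?thesis unfolding D_def e .
    qed
    have "t powr (-\<gamma>) = 1 / t powr \<gamma>" by (simp add: powr_minus_divide)
    also have "\<dots> \<le> 1 / (2 / \<delta>0)" by (rule divide_left_mono) (use A4 d0 tpos in auto)
    also have "\<dots> = \<delta>0 / 2" by simp
    also have "\<dots> < \<delta>0" using d0 by simp
    finally have C1: "t powr (-\<gamma>) < \<delta>0" .
    have lnt: "ln t \<le> t powr (\<kappa>/2) / (\<kappa>/2)" by (rule ln_powr_bound) (use t1 k in auto)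
    have p1: "1 \<le> t powr (\<kappa>/2)" using t1 k by (simp add: ge_one_powr_ge_zero)
    have "ln (t powr q / lam) = q * ln t - ln lam" using tpos lam by (simp add: ln_div ln_powr)
    also have "\<dots> \<le> q * (t powr (\<kappa>/2) / (\<kappa>/2)) + \<bar>ln lam\<bar> * t powr (\<kappa>/2)"
    proof -
      have "q * ln t \<le> q * (t powr (\<kappa>/2) / (\<kappa>/2))" using mult_left_mono[OF lnt, of q] q by linarith
      moreover have "- ln lam \<le> \<bar>ln lam\<bar> * t powr (\<kappa>/2)"
      proof -
        have "\<bar>ln lam\<bar> * 1 \<le> \<bar>ln lam\<bar> * t powr (\<kappa>/2)" by (rule mult_left_mono[OF p1]) simp
        then show ?thesis by linarith
      qed
      ultimately show ?thesis by simp
    qed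
    also have "\<dots> = 2 * K * t powr (\<kappa>/2)" unfolding K_def using k by (simp add: field_simps)
    finally have lnb: "max 0 (ln (t powr q / lam)) \<le> 2 * K * t powr (\<kappa>/2)"
      using K p1 by (simp add: max_def)
    define Y where "Y = sqrt K * t powr (1/2 + \<kappa>/4)"
    have Y0: "Y \<ge> 0" unfolding Y_def using K by simp
    have "t/2 * max 0 (ln (t powr q / lam)) \<le> t/2 * (2 * K * t powr (\<kappa>/2))"
      using lnb tpos by (intro mult_left_mono) auto
    also have "\<dots> = K * (t * t powr (\<kappa>/2))" by simp
    also have "t * t powr (\<kappa>/2) = (t powr (1/2 + \<kappa>/4))\<^sup>2"
      using tpos by (simp add: power2_eq_square powr_add[symmetric] powr_mult_base)
    also have "K * \<dots> = Y\<^sup>2" unfolding Y_def using K by (simp add: power_mult_distrib)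
    finally have "t/2 * max 0 (ln (t powr q / lam)) \<le> Y\<^sup>2" .
    then have wY: "w \<le> Y" unfolding w_def using real_sqrt_le_mono[OF \<open>t/2 * max 0 (ln (t powr q / lam)) \<le> Y\<^sup>2\<close>] Y0 by simp
    have "Y * 4 \<le> D"
    proof -
      have "Y * 4 = (4 * sqrt K) * t powr (1/2 + \<kappa>/4)" unfolding Y_def by simp
      also have "\<dots> \<le> t powr (\<kappa>/4) * t powr (1/2 + \<kappa>/4)"
        using A1 by (intro mult_right_mono) auto
      also have "\<dots> = D" unfolding D using tpos by (simp add: powr_add[symmetric] algebra_simps)
      finally show ?thesis .
    qed
    then have wD: "w + 1 \<le> D / 2" using wY A2 D by simp
    have C2: "D \<ge> w + 1" using wD A2 D by simp
    define v where "v = D - w - 1"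
    have v: "v \<ge> D / 2" using wD by (simp add: v_def)
    have D0: "D \<ge> 0" using A2 D by simp
    have "D\<^sup>2 / 4 \<le> v\<^sup>2"
    proof -
      have "(D/2)\<^sup>2 \<le> v\<^sup>2" using v D0 by (intro power_mono) auto
      then show ?thesis by (simp add: power_divide)
    qed
    have Dsq: "D\<^sup>2 = t * t powr \<kappa>"
      unfolding D using tpos by (simp add: power2_eq_square powr_add[symmetric] powr_mult_base)
    have "t powr \<kappa> / 2 \<le> 2 * v\<^sup>2 / t"
    proof -
      have "t powr \<kappa> / 2 = (D\<^sup>2 / 4) * 2 / t" using Dsq tpos by (simp add: field_simps)
      also have "\<dots> \<le> v\<^sup>2 * 2 / t"
        using \<open>D\<^sup>2 / 4 \<le> v\<^sup>2\<close> tpos by (intro divide_right_mono mult_right_mono) auto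
      finally show ?thesis by simp
    qed
    then have e1: "exp (-2 * v\<^sup>2 / t) \<le> exp (- (t powr \<kappa> / 2))" by simp
    have "\<beta> * ln t \<le> \<beta> * (t powr (\<kappa>/2) / (\<kappa>/2))" using mult_left_mono[OF lnt, of \<beta>] b by linarith
    also have "\<dots> = (4 * \<beta> / \<kappa>) * t powr (\<kappa>/2) / 2" by (simp add: field_simps)
    also have "\<dots> \<le> t powr (\<kappa>/2) * t powr (\<kappa>/2) / 2"
      using A3 p1 by (intro divide_right_mono mult_right_mono) auto
    also have "\<dots> = t powr \<kappa> / 2" using tpos by (simp add: powr_add[symmetric])
    finally have "\<beta> * ln t \<le> t powr \<kappa> / 2" .
    then have "exp (- (t powr \<kappa> / 2)) \<le> exp (- (\<beta> * ln t))" by simp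
    also have "exp (- (\<beta> * ln t)) = t powr (-\<beta>)" using tpos by (simp add: powr_def)
    finally have C3: "exp (-2 * v\<^sup>2 / t) \<le> t powr (-\<beta>)" using e1 by (rule order_trans[rotated])
    show "t \<ge> 1 \<and> t powr (-\<gamma>) < \<delta>0 \<and>
     t powr (-\<gamma>) * t \<ge> sqrt (t/2 * max 0 (ln (t powr q / lam))) + 1 \<and>
     exp (-2 * (t powr (-\<gamma>) * t - sqrt (t/2 * max 0 (ln (t powr q / lam))) - 1)\<^sup>2 / t) \<le> t powr (-\<beta>)"
      using t1 C1 C2 C3 unfolding v_def D_def w_def by simp
  qed
qed


lemma sum_tail_finite:
  fixes p :: "nat \<Rightarrow> ennreal"
  assumes p1: "\<And>t. p t \<le> 1" and tail: "\<And>t. t \<ge> t1 \<Longrightarrow> p t \<le> ennreal (C * real t powr (-\<beta>))"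
    and C: "C \<ge> 0" and bm: "\<beta> * real m > 1" and t1: "t1 \<ge> 1"
  shows "(\<Sum>t. p t ^ m) < \<infinity>"
proof -
  define g where "g t = (if t < t1 then 1 else C ^ m * real t powr (-(\<beta> * real m)))" for t
  have g0: "g t \<ge> 0" for t unfolding g_def using C by auto
  have pg: "p t ^ m \<le> ennreal (g t)" for t
  proof (cases "t < t1")
    case True
    then show ?thesis using p1[of t] by (simp add: g_def power_le_one)
  next
    case False
    then have tp: "real t > 0" using t1 by simp
    have "p t ^ m \<le> ennreal (C * real t powr (-\<beta>)) ^ m"
      by (rule power_mono[OF tail]) (use False in auto)
    also have "\<dots> = ennreal ((C * real t powr (-\<beta>)) ^ m)"
      using C by (intro ennreal_power) simp
    also have "(C * real t powr (-\<beta>)) ^ m = C ^ m * real t powr (-(\<beta> * real m))"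
      using tp by (simp add: power_mult_distrib powr_power mult.commute)
    finally show ?thesis using False by (simp add: g_def)
  qed
  have "summable (\<lambda>t. C ^ m * real t powr (-(\<beta> * real m)))"
    by (intro summable_mult) (use bm in \<open>simp add: summable_real_powr_iff\<close>)
  moreover have "eventually (\<lambda>t. g t = C ^ m * real t powr (-(\<beta> * real m))) sequentially"
    unfolding g_def eventually_sequentially by (intro exI[of _ t1]) auto
  ultimately have sg: "summable g" using summable_cong by metis
  have "(\<Sum>t. p t ^ m) \<le> (\<Sum>t. ennreal (g t))" by (intro suminf_le pg) auto
  also have "\<dots> = ennreal (\<Sum>t. g t)" by (rule suminf_ennreal2[OF g0 sg])
  also have "\<dots> < \<infinity>" by simp
  finally show ?thesis .
qed


lemma exp_w_bound:
  fixes tr q lam :: real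
  assumes tr: "tr \<ge> 1" and lam: "lam > 0"
  shows "exp (-2 * (sqrt (tr/2 * max 0 (ln (tr powr q / lam))))\<^sup>2 / tr) \<le> lam * tr powr (-q)"
proof -
  let ?y = "ln (tr powr q / lam)"
  have "(sqrt (tr/2 * max 0 ?y))\<^sup>2 = tr/2 * max 0 ?y" using tr by (intro real_sqrt_pow2) auto
  then have "-2 * (sqrt (tr/2 * max 0 ?y))\<^sup>2 / tr = - max 0 ?y" using tr by simp
  then have "exp (-2 * (sqrt (tr/2 * max 0 ?y))\<^sup>2 / tr) = exp (- max 0 ?y)" by simp
  also have "\<dots> \<le> exp (- ?y)" by simp
  also have "exp (- ?y) = lam / tr powr q" using tr lam by (simp add: exp_minus exp_ln)
  also have "\<dots> = lam * tr powr (-q)" by (simp add: powr_minus_divide)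
  finally show ?thesis .
qed

theorem theorem1:
  fixes \<alpha> \<epsilon> lam q \<xi> :: real and e :: "nat \<Rightarrow> real" and T N :: nat
    and \<mu> :: "real measure" and F :: "real \<Rightarrow> real"
  assumes alpha: "0 < \<alpha>" "\<alpha> < 1"
    and eps: "0 < \<epsilon>" "\<epsilon> \<le> 1/4"
    and spend: "0 \<le> e 0" "incseq e" "e \<longlonglongrightarrow> \<epsilon>"
    and growth: "lam > 0" "q > 1" "T \<ge> 1" "\<forall>t\<ge>T. e t - e (t - 1) \<ge> lam * real t powr (- q)"
    and mu: "prob_space \<mu>" "sets \<mu> = sets borel" "AE x in \<mu>. 0 \<le> x \<and> x \<le> 1"
    and F: "F = (\<lambda>x. measure \<mu> {..x})"
    and holder: "\<xi> > 0" "\<exists>a b c. a < \<alpha> \<and> \<alpha> < b \<and> c > 0 \<and>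
        (\<forall>x\<in>{a<..<b}. \<forall>y\<in>{a<..<b}. \<bar>F x - F y\<bar> \<le> c * \<bar>x - y\<bar> powr \<xi>)"
  shows "\<forall>i. 1 \<le> i \<and> int i \<le> int N - \<lfloor>2 / \<xi>\<rfloor> \<longrightarrow>
     (\<integral>\<^sup>+ \<omega>. ennreal_of_enat
        (order_stat (map (\<lambda>k. stop_time (boundaries \<alpha> e) (snd (\<omega> k))) [0..<N]) i)
      \<partial>(PiM {..<N} (\<lambda>_. arm_law \<mu>))) < \<infinity>"
proof (intro allI impI)
  fix i assume hi: "1 \<le> i \<and> int i \<le> int N - \<lfloor>2 / \<xi>\<rfloor>"
  obtain lo hi c where H: "lo < \<alpha>" "\<alpha> < hi" "c > 0"
    "\<forall>x\<in>{lo<..<hi}. \<forall>y\<in>{lo<..<hi}. \<bar>measure \<mu> {..x} - measure \<mu> {..y}\<bar> \<le> c * \<bar>x - y\<bar> powr \<xi>"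
    using holder(2) unfolding F by blast
  have fl: "\<lfloor>2 / \<xi>\<rfloor> \<ge> 0" using holder(1) by simp
  have i1: "1 \<le> i" using hi by auto
  have "int i \<le> int N" using hi fl by linarith
  then have iN: "i \<le> N" by simp
  define m where "m = N - i + 1"
  have m1: "m \<ge> 1" by (simp add: m_def)
  have mint: "int m \<ge> \<lfloor>2 / \<xi>\<rfloor> + 1" using hi iN unfolding m_def by linarith
  have "real m > 2 / \<xi>"
  proof -
    have "2 / \<xi> < real_of_int (\<lfloor>2 / \<xi>\<rfloor> + 1)" by linarith
    also have "\<dots> \<le> real m" using mint by (metis of_int_le_iff of_int_of_nat_eq)
    finally show ?thesis .
  qed
  then have mxi: "real m * \<xi> > 2" using holder(1) by (simp add: field_simps)
  interpret SC: spend_ctx \<alpha> e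
  proof
    show "0 \<le> e 0" "incseq e" by (fact spend(1), fact spend(2))
    fix t show "e t \<le> 1/4" using incseq_le[OF spend(2,3), of t] eps(2) by simp
  qed
  define \<gamma> where "\<gamma> = (1 / (real m * \<xi>) + 1/2) / 2"
  define \<beta> where "\<beta> = \<gamma> * \<xi>"
  have "0 < 1 / (real m * \<xi>)" using mxi by simp
  then have g0: "0 < \<gamma>" unfolding \<gamma>_def by (intro divide_pos_pos add_pos_pos) auto
  have inv: "1 / (real m * \<xi>) < 1/2" using mxi by (simp add: divide_simps)
  have g1: "\<gamma> < 1/2" using inv by (simp add: \<gamma>_def)
  have b0: "\<beta> > 0" using g0 holder(1) by (simp add: \<beta>_def)
  have bm: "\<beta> * real m > 1"
  proof -
    have "\<beta> * real m = (1 + real m * \<xi> / 2) / 2" unfolding \<beta>_def \<gamma>_def using mxi holder(1) m1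
      by (simp add: field_simps)
    then show ?thesis using mxi by simp
  qed
  define \<delta>0 where "\<delta>0 = min (\<alpha> - lo) (hi - \<alpha>)"
  have d0: "\<delta>0 > 0" using H by (simp add: \<delta>0_def)
  obtain t0 where t0: "\<forall>t\<ge>t0. t \<ge> 1 \<and> t powr (-\<gamma>) < \<delta>0 \<and>
     t powr (-\<gamma>) * t \<ge> sqrt (t/2 * max 0 (ln (t powr q / lam))) + 1 \<and>
     exp (-2 * (t powr (-\<gamma>) * t - sqrt (t/2 * max 0 (ln (t powr q / lam))) - 1)\<^sup>2 / t) \<le> t powr (-\<beta>)"
    using asym[of q lam \<gamma> \<beta> \<delta>0] growth(1,2) g0 g1 b0 d0 by auto
  define t1 where "t1 = max (max T 1) (nat \<lceil>t0\<rceil>)"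
  have armP: "prob_space (arm_law \<mu>)" by (rule arm_law_prob[OF mu(1,2)])
  interpret ARM: prob_space "arm_law \<mu>" by (rule armP)
  have sp: "space (arm_law \<mu>) = UNIV"
    using sets_eq_imp_space_eq[OF arm_law_sets[OF mu(1,2)]] by (simp add: space_pair_measure space_PiM)
  have Eeq: "{x \<in> space (arm_law \<mu>). enat t < stop_time (boundaries \<alpha> e) (snd x)} = UNIV \<times> {x. enat t < stop_time (boundaries \<alpha> e) x}" for t
    using sp by auto
  have Emeas: "{x \<in> space (arm_law \<mu>). enat t < stop_time (boundaries \<alpha> e) (snd x)} \<in> sets (arm_law \<mu>)" for t
  proof -
    have "{x. enat t < stop_time (boundaries \<alpha> e) x} \<in> sets (PiM UNIV (\<lambda>_::nat. count_space (UNIV::bool set)))"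
      using StGt_meas[of t "boundaries \<alpha> e" 0] sets_Bern[of 0] by simp
    then have "UNIV \<times> {x. enat t < stop_time (boundaries \<alpha> e) x} \<in> sets (borel \<Otimes>\<^sub>M PiM UNIV (\<lambda>_::nat. count_space (UNIV::bool set)))"
      by (intro pair_measureI) auto
    then show ?thesis unfolding Eeq using arm_law_sets[OF mu(1,2)] by simp
  qed
  define p where "p t = emeasure (arm_law \<mu>) {x \<in> space (arm_law \<mu>). enat t < stop_time (boundaries \<alpha> e) (snd x)}" for t
  have p1: "p t \<le> 1" for t unfolding p_def by (rule ARM.emeasure_le_1)
  define C where "C = c * 2 powr \<xi> + 1"
  have C0: "C \<ge> 0" using H by (simp add: C_def)
  have tail: "p t \<le> ennreal (C * real t powr (-\<beta>))" if tt: "t \<ge> t1" for t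
  proof -
    obtain n where n: "t = Suc n" using tt unfolding t1_def by (cases t) auto
    define tr where "tr = real t"
    have trt0: "tr \<ge> t0" using tt unfolding tr_def t1_def by linarith
    define \<delta> where "\<delta> = tr powr (-\<gamma>)"
    define w where "w = sqrt (tr/2 * max 0 (ln (tr powr q / lam)))"
    have A: "tr \<ge> 1" "\<delta> < \<delta>0" "\<delta> * tr \<ge> w + 1" "exp (-2 * (\<delta> * tr - w - 1)\<^sup>2 / tr) \<le> tr powr (-\<beta>)"
      using t0 trt0 unfolding \<delta>_def w_def by auto
    have w0: "w \<ge> 0" unfolding w_def using A(1) by simp
    have TT: "t \<ge> T" using tt unfolding t1_def by simp
    have "exp (-2 * w\<^sup>2 / tr) \<le> lam * tr powr (-q)" unfolding w_def by (rule exp_w_bound[OF A(1) growth(1)])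
    also have "\<dots> \<le> e (Suc n) - e n" using growth(4) TT n unfolding tr_def by auto
    finally have d: "exp (-2 * w\<^sup>2 / real (Suc n)) \<le> e (Suc n) - e n" using n tr_def by simp
    have "p t = emeasure (arm_law \<mu>) (UNIV \<times> {x. enat (Suc n) < stop_time (boundaries \<alpha> e) x})"
      unfolding p_def Eeq n ..
    also have "\<dots> \<le> emeasure \<mu> {r. \<bar>r - \<alpha>\<bar> < \<delta>} + ennreal (exp (-2 * (\<delta> * real (Suc n) - w - 1)\<^sup>2 / real (Suc n)))"
      by (rule SC.arm_tail[OF mu _ _ w0 d]) (use alpha A n tr_def in auto)
    also have "\<dots> \<le> ennreal (c * 2 powr \<xi> * tr powr (-\<beta>)) + ennreal (tr powr (-\<beta>))"
    proof (rule add_mono)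
      interpret MU: prob_space \<mu> by (rule mu(1))
      have dpos: "\<delta> > 0" unfolding \<delta>_def using A(1) by simp
      have "measure \<mu> {r. \<bar>r - \<alpha>\<bar> < \<delta>} \<le> c * (2 * \<delta>) powr \<xi>"
        by (rule holder_mass[OF mu(1,2) _ _ dpos H(4)]) (use A(2) in \<open>auto simp: \<delta>0_def\<close>)
      also have "(2 * \<delta>) powr \<xi> = 2 powr \<xi> * tr powr (-\<beta>)"
        unfolding \<delta>_def \<beta>_def using A(1) by (simp add: powr_mult powr_powr)
      finally have "measure \<mu> {r. \<bar>r - \<alpha>\<bar> < \<delta>} \<le> c * 2 powr \<xi> * tr powr (-\<beta>)" by simp
      then show "emeasure \<mu> {r. \<bar>r - \<alpha>\<bar> < \<delta>} \<le> ennreal (c * 2 powr \<xi> * tr powr (-\<beta>))"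
        by (simp add: MU.emeasure_eq_measure ennreal_leI)
      show "ennreal (exp (-2 * (\<delta> * real (Suc n) - w - 1)\<^sup>2 / real (Suc n))) \<le> ennreal (tr powr (-\<beta>))"
        using A(4) n tr_def by (intro ennreal_leI) simp
    qed
    also have "\<dots> = ennreal (C * tr powr (-\<beta>))"
      using H(3) by (simp add: C_def ennreal_plus[symmetric] distrib_right del: ennreal_plus)
    finally show ?thesis unfolding tr_def .
  qed
  have t1pos: "t1 \<ge> 1" unfolding t1_def by simp
  have fin: "(\<Sum>t. p t ^ m) < \<infinity>"
    by (rule sum_tail_finite[OF p1 tail C0 bm t1pos])
  have "(\<integral>\<^sup>+ \<omega>. ennreal_of_enat
        (order_stat (map (\<lambda>k. stop_time (boundaries \<alpha> e) (snd (\<omega> k))) [0..<N]) i)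
      \<partial>(PiM {..<N} (\<lambda>_. arm_law \<mu>))) \<le> of_nat (N choose m) * (\<Sum>t. p t ^ m)"
    using order_stat_integral[OF armP Emeas i1 iN]
    unfolding p_def m_def by simp
  also have "\<dots> < \<infinity>" using fin by (simp add: ennreal_mult_less_top of_nat_less_top)
  finally show "(\<integral>\<^sup>+ \<omega>. ennreal_of_enat
        (order_stat (map (\<lambda>k. stop_time (boundaries \<alpha> e) (snd (\<omega> k))) [0..<N]) i)
      \<partial>(PiM {..<N} (\<lambda>_. arm_law \<mu>))) < \<infinity>" .
qed


end
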